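(* Let $n\ge1$, $H,K\le S_n$, $\phi:H\to\mathbb C$, $\psi:K\to\mathbb C$ arbitrary functions, and let $Y\subseteq\mathbb S_n(\mathbb C)$ be a set of symmetric matrices with $S_\sigma\in Y$ for every $\sigma\in S_n$. Then $d_\phi^H(A)=d_\psi^K(A)$ for all $A\in Y$ if and only if $d_\phi^H(S_\sigma)=d_\psi^K(S_\sigma)$ for all $\sigma\in S_n$.
   Context: $\mathbb S_n(\mathbb C)$ is the set of complex symmetric $n\times n$ matrices. For $G\le S_n$ and $\chi:G\to\mathbb C$, $\hat\chi$ is the extension of $\chi$ by $0$ outside $G$ and $d_\chi^G(A)=\sum_{\sigma\in S_n}\hat\chi(\sigma)\prod_{i=1}^n A_{i\,\sigma(i)}$. For $\sigma\in S_n$, $S_\sigma$ is the $n\times n$ $0/1$ matrix with $(S_\sigma)_{ij}=1$ iff $\sigma(i)=j$ or $\sigma^{-1}(i)=j$. *)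

theory Defs
  imports Complex_Main "HOL-Algebra.Sym_Groups"
begin

text \<open>n x n complex matrices are represented as functions nat => nat => complex,
  indexed by {1..n}, with all entries outside {1..n} x {1..n} equal to 0
  (canonical representative).\<close>

definition sym_mats :: "nat \<Rightarrow> (nat \<Rightarrow> nat \<Rightarrow> complex) set" where
  "sym_mats n = {A. (\<forall>i\<in>{1..n}. \<forall>j\<in>{1..n}. A i j = A j i) \<and>
                    (\<forall>i j. i \<notin> {1..n} \<or> j \<notin> {1..n} \<longrightarrow> A i j = 0)}"

definition ext0 :: "(nat \<Rightarrow> nat) set \<Rightarrow> ((nat \<Rightarrow> nat) \<Rightarrow> complex) \<Rightarrow> (nat \<Rightarrow> nat) \<Rightarrow> complex" where
  "ext0 G \<chi> \<sigma> = (if \<sigma> \<in> G then \<chi> \<sigma> else 0)"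

definition immanant_d :: "nat \<Rightarrow> (nat \<Rightarrow> nat) set \<Rightarrow> ((nat \<Rightarrow> nat) \<Rightarrow> complex)
    \<Rightarrow> (nat \<Rightarrow> nat \<Rightarrow> complex) \<Rightarrow> complex" where
  "immanant_d n G \<chi> A = (\<Sum>\<sigma>\<in>carrier (sym_group n). ext0 G \<chi> \<sigma> * (\<Prod>i\<in>{1..n}. A i (\<sigma> i)))"

definition S_mat :: "nat \<Rightarrow> (nat \<Rightarrow> nat) \<Rightarrow> (nat \<Rightarrow> nat \<Rightarrow> complex)" where
  "S_mat n \<sigma> = (\<lambda>i j. if i \<in> {1..n} \<and> j \<in> {1..n} \<and> (\<sigma> i = j \<or> Hilbert_Choice.inv \<sigma> i = j) then 1 else 0)"

end

theory Submission
  imports Defs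
begin

definition Gr :: "(nat \<Rightarrow> nat) \<Rightarrow> nat \<Rightarrow> nat set" where
  "Gr \<sigma> i = {\<sigma> i, Hilbert_Choice.inv \<sigma> i}"

lemma mono_inv:
  assumes s: "\<sigma> permutes S" and t: "\<tau> permutes S" and fin: "finite S"
    and sym: "\<forall>i\<in>S. \<forall>j\<in>S. A i j = A j i"
    and G: "\<forall>i\<in>S. Gr \<sigma> i = Gr \<tau> i"
  shows "(\<Prod>i\<in>S. A i (\<tau> i)) = (\<Prod>i\<in>S. A i (\<sigma> i))"
proof -
  define D where "D = {i\<in>S. \<tau> i \<noteq> \<sigma> i}"
  have Dinv: "\<tau> i = Hilbert_Choice.inv \<sigma> i" if "i \<in> D" for i
  proof -
    have "\<tau> i \<in> Gr \<sigma> i" using G that unfolding D_def Gr_def by auto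
    then show ?thesis using that unfolding D_def Gr_def by auto
  qed
  have sub: "\<sigma> ` D \<subseteq> D"
  proof
    fix j assume "j \<in> \<sigma> ` D"
    then obtain i where i: "i \<in> D" "j = \<sigma> i" by auto
    have iS: "i \<in> S" using i D_def by auto
    have jS: "j \<in> S" using i iS permutes_in_image[OF s] by auto
    have ij: "Hilbert_Choice.inv \<sigma> j = i" using i permutes_inverses[OF s] by auto
    have ti: "\<tau> i = Hilbert_Choice.inv \<sigma> i" "\<tau> i \<noteq> \<sigma> i" using Dinv i D_def by auto
    show "j \<in> D"
    proof (rule ccontr)
      assume "j \<notin> D"
      hence tj: "\<tau> j = \<sigma> j" using jS D_def by auto
      have "i \<in> Gr \<tau> j" using G jS ij unfolding Gr_def by auto
      hence "i = \<tau> j \<or> i = Hilbert_Choice.inv \<tau> j" unfolding Gr_def by auto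
      thus False
      proof
        assume "i = Hilbert_Choice.inv \<tau> j"
        hence "\<tau> i = j" using permutes_inverses[OF t] by auto
        thus False using ti i by auto
      next
        assume "i = \<tau> j"
        hence "\<sigma> j = i" using tj by auto
        hence "Hilbert_Choice.inv \<sigma> i = j" using permutes_inverses[OF s] by auto
        thus False using ti i by auto
      qed
    qed
  qed
  have DS: "D \<subseteq> S" using D_def by auto
  have finD: "finite D" using fin DS finite_subset by auto
  have injD: "inj_on \<sigma> D" using permutes_inj_on[OF s] .
  have imD: "\<sigma> ` D = D" using endo_inj_surj[OF finD sub injD] .
  have "(\<Prod>i\<in>D. A i (Hilbert_Choice.inv \<sigma> i)) = (\<Prod>j\<in>D. A (\<sigma> j) (Hilbert_Choice.inv \<sigma> (\<sigma> j)))"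
    using prod.reindex[OF injD, of "\<lambda>i. A i (Hilbert_Choice.inv \<sigma> i)"] imD by simp
  also have "\<dots> = (\<Prod>j\<in>D. A (\<sigma> j) j)" using permutes_inverses[OF s] by simp
  also have "\<dots> = (\<Prod>j\<in>D. A j (\<sigma> j))"
  proof (rule prod.cong)
    fix j assume "j \<in> D"
    hence "j \<in> S" "\<sigma> j \<in> S" using DS permutes_in_image[OF s] by auto
    thus "A (\<sigma> j) j = A j (\<sigma> j)" using sym by blast
  qed simp
  finally have eqD: "(\<Prod>i\<in>D. A i (Hilbert_Choice.inv \<sigma> i)) = (\<Prod>j\<in>D. A j (\<sigma> j))" .
  have "(\<Prod>i\<in>S. A i (\<tau> i)) = (\<Prod>i\<in>S-D. A i (\<tau> i)) * (\<Prod>i\<in>D. A i (\<tau> i))"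
    using prod.subset_diff[OF DS fin] by simp
  also have "(\<Prod>i\<in>D. A i (\<tau> i)) = (\<Prod>i\<in>D. A i (Hilbert_Choice.inv \<sigma> i))"
    using Dinv by simp
  also have "(\<Prod>i\<in>S-D. A i (\<tau> i)) = (\<Prod>i\<in>S-D. A i (\<sigma> i))"
    by (rule prod.cong) (auto simp: D_def)
  also have "(\<Prod>i\<in>S-D. A i (\<sigma> i)) * (\<Prod>i\<in>D. A i (Hilbert_Choice.inv \<sigma> i)) = (\<Prod>i\<in>S. A i (\<sigma> i))"
    using eqD prod.subset_diff[OF DS fin, of "\<lambda>i. A i (\<sigma> i)"] by simp
  finally show ?thesis .
qed

lemma class_sum:
  fixes f g :: "'a \<Rightarrow> complex" and Gf :: "'a \<Rightarrow> 'b"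
  assumes fin: "finite R"
    and closed: "\<And>\<sigma> \<rho>. \<sigma> \<in> R \<Longrightarrow> \<rho> \<in> P \<Longrightarrow> Gf \<rho> = Gf \<sigma> \<Longrightarrow> \<rho> \<in> R"
    and RP: "R \<subseteq> P"
    and ginv: "\<And>\<sigma> \<rho>. \<sigma> \<in> R \<Longrightarrow> \<rho> \<in> R \<Longrightarrow> Gf \<rho> = Gf \<sigma> \<Longrightarrow> g \<rho> = g \<sigma>"
    and zero: "\<And>\<sigma>. \<sigma> \<in> R \<Longrightarrow> (\<Sum>\<rho>\<in>{\<rho>\<in>P. Gf \<rho> = Gf \<sigma>}. f \<rho>) = 0"
  shows "(\<Sum>\<sigma>\<in>R. f \<sigma> * g \<sigma>) = 0"
proof -
  have "(\<Sum>\<sigma>\<in>R. f \<sigma> * g \<sigma>) = (\<Sum>y\<in>Gf ` R. \<Sum>\<sigma>\<in>{x\<in>R. Gf x = y}. f \<sigma> * g \<sigma>)"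
    using sum.image_gen[OF fin] by blast
  also have "\<dots> = 0"
  proof (rule sum.neutral, rule ballI)
    fix y assume "y \<in> Gf ` R"
    then obtain s where s: "s \<in> R" "y = Gf s" by auto
    have eq: "{x\<in>R. Gf x = y} = {\<rho>\<in>P. Gf \<rho> = Gf s}"
    proof
      show "{x\<in>R. Gf x = y} \<subseteq> {\<rho>\<in>P. Gf \<rho> = Gf s}" using s RP by blast
      show "{\<rho>\<in>P. Gf \<rho> = Gf s} \<subseteq> {x\<in>R. Gf x = y}" using s closed by blast
    qed
    have "(\<Sum>\<sigma>\<in>{x\<in>R. Gf x = y}. f \<sigma> * g \<sigma>) = (\<Sum>\<sigma>\<in>{x\<in>R. Gf x = y}. f \<sigma> * g s)"
    proof (rule sum.cong)
      fix x assume "x \<in> {x\<in>R. Gf x = y}"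
      hence "x \<in> R" "Gf x = Gf s" using s by auto
      thus "f x * g x = f x * g s" using ginv[OF s(1)] by metis
    qed simp
    also have "\<dots> = (\<Sum>\<rho>\<in>{\<rho>\<in>P. Gf \<rho> = Gf s}. f \<rho>) * g s"
      unfolding eq by (rule sum_distrib_right[symmetric])
    also have "\<dots> = 0" using zero s by simp
    finally show "(\<Sum>\<sigma>\<in>{x\<in>R. Gf x = y}. f \<sigma> * g \<sigma>) = 0" .
  qed
  finally show ?thesis .
qed


lemma Gr_out:
  assumes "\<sigma> permutes S" "i \<notin> S" shows "Gr \<sigma> i = {i}"
  using assms permutes_not_in[OF assms(1)] permutes_not_in[OF permutes_inv[OF assms(1)]]
  unfolding Gr_def by auto

lemma Gr_eq:
  assumes "\<sigma> permutes S" "\<tau> permutes S"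
  shows "(Gr \<sigma> = Gr \<tau>) \<longleftrightarrow> (\<forall>i\<in>S. Gr \<sigma> i = Gr \<tau> i)"
proof
  assume "\<forall>i\<in>S. Gr \<sigma> i = Gr \<tau> i"
  thus "Gr \<sigma> = Gr \<tau>" using Gr_out[OF assms(1)] Gr_out[OF assms(2)] by (intro ext) metis
qed auto

lemma N_iff:
  assumes s: "\<sigma> permutes S" and t: "\<tau> permutes S"
  shows "(\<forall>i\<in>S. \<tau> i = \<sigma> i \<or> Hilbert_Choice.inv \<tau> i = \<sigma> i) \<longleftrightarrow> (\<forall>i\<in>S. Gr \<sigma> i \<subseteq> Gr \<tau> i)"
proof
  assume h: "\<forall>i\<in>S. \<tau> i = \<sigma> i \<or> Hilbert_Choice.inv \<tau> i = \<sigma> i"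
  show "\<forall>i\<in>S. Gr \<sigma> i \<subseteq> Gr \<tau> i"
  proof
    fix i assume iS: "i \<in> S"
    define k where "k = Hilbert_Choice.inv \<sigma> i"
    have kS: "k \<in> S" using k_def iS permutes_in_image[OF permutes_inv[OF s]] by auto
    have sk: "\<sigma> k = i" using k_def permutes_inverses[OF s] by auto
    have "\<tau> k = i \<or> Hilbert_Choice.inv \<tau> k = i" using h kS sk by auto
    hence "k = Hilbert_Choice.inv \<tau> i \<or> k = \<tau> i"
      using permutes_inverses[OF t] by metis
    thus "Gr \<sigma> i \<subseteq> Gr \<tau> i" using h iS k_def unfolding Gr_def by auto
  qed
next
  assume "\<forall>i\<in>S. Gr \<sigma> i \<subseteq> Gr \<tau> i"
  thus "\<forall>i\<in>S. \<tau> i = \<sigma> i \<or> Hilbert_Choice.inv \<tau> i = \<sigma> i" unfolding Gr_def by auto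
qed

lemma Smono:
  assumes s: "\<sigma> permutes {1..n}" and t: "\<tau> permutes {1..n}"
  shows "(\<Prod>i\<in>{1..n}. S_mat n \<tau> i (\<sigma> i)) = (if (\<forall>i\<in>{1..n}. Gr \<sigma> i \<subseteq> Gr \<tau> i) then 1 else 0)"
proof (cases "\<forall>i\<in>{1..n}. \<tau> i = \<sigma> i \<or> Hilbert_Choice.inv \<tau> i = \<sigma> i")
  case True
  hence "(\<Prod>i\<in>{1..n}. S_mat n \<tau> i (\<sigma> i)) = 1"
    by (intro prod.neutral) (use permutes_in_image[OF s] in \<open>auto simp: S_mat_def\<close>)
  thus ?thesis using True N_iff[OF s t] by simp
next
  case False
  then obtain i where i: "i \<in> {1..n}" "\<not> (\<tau> i = \<sigma> i \<or> Hilbert_Choice.inv \<tau> i = \<sigma> i)" by blast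
  have p0: "(\<Prod>i\<in>{1..n}. S_mat n \<tau> i (\<sigma> i)) = 0"
    by (rule prod_zero) (use i in \<open>auto simp: S_mat_def\<close>)
  have c: "\<not> (\<forall>i\<in>{1..n}. Gr \<sigma> i \<subseteq> Gr \<tau> i)" using False N_iff[OF s t] by blast
  show ?thesis unfolding if_not_P[OF c] by (rule p0)
qed

definition mcnt :: "nat \<Rightarrow> (nat \<Rightarrow> nat) \<Rightarrow> nat" where
  "mcnt n \<sigma> = card {i\<in>{1..n}. \<sigma> i = Hilbert_Choice.inv \<sigma> i}"

lemma mcnt_le: "mcnt n \<sigma> \<le> n"
proof -
  have "mcnt n \<sigma> \<le> card {1..n}" unfolding mcnt_def by (rule card_mono) auto
  thus ?thesis by simp
qed

lemma mcnt_less: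
  assumes sub: "\<forall>i\<in>{1..n}. Gr \<sigma> i \<subseteq> Gr \<tau> i" and ne: "\<exists>i\<in>{1..n}. Gr \<sigma> i \<noteq> Gr \<tau> i"
  shows "mcnt n \<tau> < mcnt n \<sigma>"
proof -
  have "{i\<in>{1..n}. \<tau> i = Hilbert_Choice.inv \<tau> i} \<subset> {i\<in>{1..n}. \<sigma> i = Hilbert_Choice.inv \<sigma> i}"
  proof
    show "{i\<in>{1..n}. \<tau> i = Hilbert_Choice.inv \<tau> i} \<subseteq> {i\<in>{1..n}. \<sigma> i = Hilbert_Choice.inv \<sigma> i}"
      using sub unfolding Gr_def by fastforce
    obtain i where i: "i \<in> {1..n}" "Gr \<sigma> i \<noteq> Gr \<tau> i" using ne by blast
    have "Gr \<sigma> i \<subseteq> Gr \<tau> i" using sub i by auto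
    hence "\<sigma> i = Hilbert_Choice.inv \<sigma> i \<and> \<tau> i \<noteq> Hilbert_Choice.inv \<tau> i"
      using i unfolding Gr_def by auto
    thus "{i\<in>{1..n}. \<tau> i = Hilbert_Choice.inv \<tau> i} \<noteq> {i\<in>{1..n}. \<sigma> i = Hilbert_Choice.inv \<sigma> i}"
      using i by blast
  qed
  thus ?thesis unfolding mcnt_def by (intro psubset_card_mono) auto
qed

lemma diff_expand:
  "immanant_d n H \<phi> A - immanant_d n K \<psi> A =
   (\<Sum>\<sigma>\<in>carrier (sym_group n). (ext0 H \<phi> \<sigma> - ext0 K \<psi> \<sigma>) * (\<Prod>i\<in>{1..n}. A i (\<sigma> i)))"
  unfolding immanant_d_def by (simp add: sum_subtractf left_diff_distrib)

theorem mainTheorem7: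
  fixes n :: nat and H K :: "(nat \<Rightarrow> nat) set"
    and \<phi> \<psi> :: "(nat \<Rightarrow> nat) \<Rightarrow> complex"
    and Y :: "(nat \<Rightarrow> nat \<Rightarrow> complex) set"
  assumes "n \<ge> 1"
    and "subgroup H (sym_group n)" and "subgroup K (sym_group n)"
    and "Y \<subseteq> sym_mats n"
    and "\<forall>\<sigma>\<in>carrier (sym_group n). S_mat n \<sigma> \<in> Y"
  shows "(\<forall>A\<in>Y. immanant_d n H \<phi> A = immanant_d n K \<psi> A) \<longleftrightarrow>
         (\<forall>\<sigma>\<in>carrier (sym_group n). immanant_d n H \<phi> (S_mat n \<sigma>) = immanant_d n K \<psi> (S_mat n \<sigma>))"
proof
  assume "\<forall>A\<in>Y. immanant_d n H \<phi> A = immanant_d n K \<psi> A"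
  thus "\<forall>\<sigma>\<in>carrier (sym_group n). immanant_d n H \<phi> (S_mat n \<sigma>) = immanant_d n K \<psi> (S_mat n \<sigma>)"
    using assms(5) by blast
next
  assume hyp: "\<forall>\<sigma>\<in>carrier (sym_group n). immanant_d n H \<phi> (S_mat n \<sigma>) = immanant_d n K \<psi> (S_mat n \<sigma>)"
  define P where "P = carrier (sym_group n)"
  define f where "f = (\<lambda>\<sigma>. ext0 H \<phi> \<sigma> - ext0 K \<psi> \<sigma>)"
  have P_iff: "\<sigma> \<in> P \<longleftrightarrow> \<sigma> permutes {1..n}" for \<sigma> unfolding P_def by (simp add: sym_group_carrier)
  have finP: "finite P" unfolding P_def sym_group_def by (simp add: finite_permutations)
  have Nzero: "(\<Sum>\<sigma>\<in>{\<sigma>\<in>P. \<forall>i\<in>{1..n}. Gr \<sigma> i \<subseteq> Gr \<tau> i}. f \<sigma>) = 0" if t: "\<tau> \<in> P" for \<tau>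
  proof -
    have "0 = immanant_d n H \<phi> (S_mat n \<tau>) - immanant_d n K \<psi> (S_mat n \<tau>)"
    proof -
      have "immanant_d n H \<phi> (S_mat n \<tau>) = immanant_d n K \<psi> (S_mat n \<tau>)"
        using hyp t unfolding P_def by blast
      thus ?thesis by simp
    qed
    also have "\<dots> = (\<Sum>\<sigma>\<in>P. f \<sigma> * (\<Prod>i\<in>{1..n}. S_mat n \<tau> i (\<sigma> i)))"
      unfolding diff_expand P_def f_def ..
    also have "\<dots> = (\<Sum>\<sigma>\<in>P. if (\<forall>i\<in>{1..n}. Gr \<sigma> i \<subseteq> Gr \<tau> i) then f \<sigma> else 0)"
    proof (rule sum.cong)
      fix \<sigma> assume "\<sigma> \<in> P"
      thus "f \<sigma> * (\<Prod>i\<in>{1..n}. S_mat n \<tau> i (\<sigma> i)) = (if (\<forall>i\<in>{1..n}. Gr \<sigma> i \<subseteq> Gr \<tau> i) then f \<sigma> else 0)"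
        using Smono[of \<sigma> n \<tau>] t unfolding P_iff by simp
    qed simp
    also have "\<dots> = (\<Sum>\<sigma>\<in>{\<sigma>\<in>P. \<forall>i\<in>{1..n}. Gr \<sigma> i \<subseteq> Gr \<tau> i}. f \<sigma>)"
      by (rule sum.inter_filter[OF finP, symmetric])
    finally show ?thesis by simp
  qed
  have Ezero: "\<tau> \<in> P \<Longrightarrow> (\<Sum>\<rho>\<in>{\<rho>\<in>P. Gr \<rho> = Gr \<tau>}. f \<rho>) = 0" for \<tau>
  proof (induct \<tau> rule: measure_induct_rule[where f = "\<lambda>\<tau>. n - mcnt n \<tau>"])
    case (less \<tau>)
    define N where "N = {\<sigma>\<in>P. \<forall>i\<in>{1..n}. Gr \<sigma> i \<subseteq> Gr \<tau> i}"
    define E where "E = {\<rho>\<in>P. Gr \<rho> = Gr \<tau>}"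
    have EN: "E \<subseteq> N" unfolding E_def N_def by auto
    have finN: "finite N" using finP N_def by auto
    have "(\<Sum>\<sigma>\<in>N - E. f \<sigma> * 1) = 0"
    proof (rule class_sum[where P = P and Gf = Gr])
      show "finite (N - E)" using finN by auto
      show "\<rho> \<in> N - E" if "\<sigma> \<in> N - E" "\<rho> \<in> P" "Gr \<rho> = Gr \<sigma>" for \<sigma> \<rho>
        using that unfolding N_def E_def by auto
      show "N - E \<subseteq> P" unfolding N_def by auto
      show "(1::complex) = 1" for \<sigma> \<rho> :: "nat \<Rightarrow> nat" by simp
      show "(\<Sum>\<rho>\<in>{\<rho>\<in>P. Gr \<rho> = Gr \<sigma>}. f \<rho>) = 0" if sR: "\<sigma> \<in> N - E" for \<sigma>
      proof (rule less.hyps)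
        have sP: "\<sigma> \<in> P" and sub: "\<forall>i\<in>{1..n}. Gr \<sigma> i \<subseteq> Gr \<tau> i" and neq: "Gr \<sigma> \<noteq> Gr \<tau>"
          using sR unfolding N_def E_def by auto
        show "\<sigma> \<in> P" by fact
        have "\<exists>i\<in>{1..n}. Gr \<sigma> i \<noteq> Gr \<tau> i"
          using neq Gr_eq[of \<sigma> "{1..n}" \<tau>] sP less.prems P_iff by auto
        hence "mcnt n \<tau> < mcnt n \<sigma>" using mcnt_less sub by blast
        thus "n - mcnt n \<sigma> < n - mcnt n \<tau>" using mcnt_le[of n \<sigma>] by linarith
      qed
    qed
    hence R0: "(\<Sum>\<sigma>\<in>N - E. f \<sigma>) = 0" by simp
    have "(\<Sum>\<sigma>\<in>N. f \<sigma>) = 0" unfolding N_def by (rule Nzero[OF less.prems])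
    moreover have "(\<Sum>\<sigma>\<in>N. f \<sigma>) = (\<Sum>\<sigma>\<in>N - E. f \<sigma>) + (\<Sum>\<sigma>\<in>E. f \<sigma>)"
      using sum.subset_diff[OF EN finN] by simp
    ultimately show ?case using R0 E_def by simp
  qed
  show "\<forall>A\<in>Y. immanant_d n H \<phi> A = immanant_d n K \<psi> A"
  proof
    fix A assume "A \<in> Y"
    hence symA: "\<forall>i\<in>{1..n}. \<forall>j\<in>{1..n}. A i j = A j i" using assms(4) sym_mats_def by auto
    have "immanant_d n H \<phi> A - immanant_d n K \<psi> A = (\<Sum>\<sigma>\<in>P. f \<sigma> * (\<Prod>i\<in>{1..n}. A i (\<sigma> i)))"
      unfolding diff_expand P_def f_def ..
    also have "\<dots> = 0"
    proof (rule class_sum[where P = P and Gf = Gr])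
      show "finite P" by fact
      show "\<rho> \<in> P" if "\<sigma> \<in> P" "\<rho> \<in> P" "Gr \<rho> = Gr \<sigma>" for \<sigma> \<rho> using that by simp
      show "P \<subseteq> P" by simp
      show "(\<Prod>i\<in>{1..n}. A i (\<rho> i)) = (\<Prod>i\<in>{1..n}. A i (\<sigma> i))"
        if "\<sigma> \<in> P" "\<rho> \<in> P" "Gr \<rho> = Gr \<sigma>" for \<sigma> \<rho>
      proof (rule mono_inv[of \<sigma> "{1..n}" \<rho> A])
        show "\<sigma> permutes {1..n}" "\<rho> permutes {1..n}" using that P_iff by auto
        show "finite {1..n}" by simp
        show "\<forall>i\<in>{1..n}. \<forall>j\<in>{1..n}. A i j = A j i" by (rule symA)
        show "\<forall>i\<in>{1..n}. Gr \<sigma> i = Gr \<rho> i" using that by simp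
      qed
      show "(\<Sum>\<rho>\<in>{\<rho>\<in>P. Gr \<rho> = Gr \<sigma>}. f \<rho>) = 0" if "\<sigma> \<in> P" for \<sigma>
        using Ezero that .
    qed
    finally show "immanant_d n H \<phi> A = immanant_d n K \<psi> A" by simp
  qed
qed

end
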